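(* Let $p$ be an odd prime, $k$ algebraically closed of characteristic $p$, $d=p^2+1$, and let $X$ be the Artin–Schreier curve $y^p-y=-x^{d}-x^{d/2+p}$ over $k$. For every $\alpha=y^mx^ndx\in\mathcal B_X$ with $m\ge\frac{p-1}{2}$, we have $\mathcal C_X(\alpha)\notin\operatorname{Span}(\mathcal C_X(\mathcal B_\alpha))$.
   Context: $\mathcal C_X$ is the Cartier operator on $H^0(X,\Omega^1_X)$: the $p^{-1}$-semilinear map with $\mathcal C_X(f^p\alpha+\beta)=f\,\mathcal C_X(\alpha)+\mathcal C_X(\beta)$, $\mathcal C_X(x^{p-1}dx)=dx$, $\mathcal C_X(x^ndx)=0$ for $n\not\equiv-1\pmod p$. For an Artin–Schreier curve $y^p-y=f$ with $f\in k[x]$ of degree $D$ prime to $p$, the set $$\mathcal B_X=\left\{y^ix^jdx:\ 0\le i\le p-2,\ 0\le j\le \left\lceil\tfrac{(p-i-1)D}{p}\right\rceil-2\right\}$$ is a $k$-basis of $H^0(X,\Omega^1_X)$. Order $\mathcal B_X$ lexicographically with $y>x$: $y^ix^jdx>y^ax^bdx$ iff $i>a$, or $i=a$ and $j>b$. For $\alpha\in\mathcal B_X$, $\mathcal B_\alpha=\{\beta\in\mathcal B_X:\beta<\alpha\}$, and for a set $A$ of differentials, $\operatorname{Span}(\mathcal C_X(A))$ is the $k$-span of $\{\mathcal C_X(a):a\in A\}$. *)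

theory Defs
  imports "HOL-Computational_Algebra.Polynomial"
begin

text \<open>Artin--Schreier curve X: y^p - y = f(x), f in k[x], k algebraically closed of
characteristic p.  A differential of the form g(x,y) dx with g a polynomial of y-degree < p
is represented by its coefficient function c :: nat \<times> nat \<Rightarrow> k, where c (i,j) is the
coefficient of the monomial differential y^i x^j dx.  Since 1,y,...,y^(p-1) are linearly
independent over k(x), this representation is faithful (two such differentials are equal
iff their coefficient functions agree).\<close>

text \<open>Inverse Frobenius (p-th root) on k; unique since k is perfect of characteristic p.\<close>
definition frob_root :: "'k::field \<Rightarrow> 'k" where
  "frob_root c = (THE r. r ^ CHAR('k) = c)"

text \<open>Using y = y^p - f we get y^i x^j = sum_l (i choose l) (y^l)^p (-f)^(i-l) x^j, and with
(-f)^(i-l) x^j = sum_n c_n x^n the rules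
C(h^p a + b) = h C(a) + C(b), C(x^(p-1) dx) = dx, C(x^n dx) = 0 for n not = -1 mod p give
C(y^i x^j dx) = sum_l sum_m ((i choose l) c_((m+1)p-1))^(1/p) y^l x^m dx.\<close>
definition cartier_mono :: "'k::field poly \<Rightarrow> nat \<Rightarrow> nat \<Rightarrow> (nat \<times> nat \<Rightarrow> 'k)" where
  "cartier_mono f i j = (\<lambda>(l, m). frob_root
      (of_nat (i choose l) * coeff ((- f) ^ (i - l) * monom 1 j) ((m + 1) * CHAR('k) - 1)))"

text \<open>The basis B_X of H^0(X, Omega^1), indexed by exponent pairs (i,j) of y^i x^j dx.\<close>
definition AS_basis :: "nat \<Rightarrow> nat \<Rightarrow> (nat \<times> nat) set" where
  "AS_basis p D = {(i, j). i \<le> p - 2 \<and>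
      int j \<le> \<lceil>real ((p - i - 1) * D) / real p\<rceil> - 2}"

definition lex_less :: "nat \<times> nat \<Rightarrow> nat \<times> nat \<Rightarrow> bool" where
  "lex_less \<beta> \<alpha> \<longleftrightarrow> fst \<beta> < fst \<alpha> \<or> (fst \<beta> = fst \<alpha> \<and> snd \<beta> < snd \<alpha>)"

definition span_of :: "'b set \<Rightarrow> ('b \<Rightarrow> 'a \<Rightarrow> 'k::field) \<Rightarrow> ('a \<Rightarrow> 'k) set" where
  "span_of S v = {w. \<exists>c. w = (\<lambda>t. \<Sum>b\<in>S. c b * v b t)}"

end

theory Submission
  imports Defs
begin


lemma frob_root_0: assumes "CHAR('k) > 0" shows "frob_root (0::'k::field) = 0"
  unfolding frob_root_def using assms by (intro the_equality) auto

lemma frob_inj: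
  fixes r s :: "'k::field"
  assumes "prime CHAR('k)" "r ^ CHAR('k) = s ^ CHAR('k)" shows "r = s"
proof -
  have "((r - s) + s) ^ CHAR('k) = (r - s) ^ CHAR('k) + s ^ CHAR('k)"
    by (rule freshmans_dream) (use assms in auto)
  then have "(r - s) ^ CHAR('k) = 0" using assms by simp
  then show ?thesis by simp
qed

lemma frob_root_nz:
  fixes c :: "'k::alg_closed_field"
  assumes "prime CHAR('k)" "c \<noteq> 0" shows "frob_root c \<noteq> 0"
proof -
  have pos: "CHAR('k) > 0" using assms prime_gt_0_nat by blast
  obtain r where r: "r ^ CHAR('k) = c" using nth_root_exists[OF pos] by blast
  have "frob_root c = r" unfolding frob_root_def
    using r frob_inj[OF assms(1)] by (intro the_equality) auto
  then show ?thesis using r assms pos by auto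
qed

lemma coeff_binom:
  "coeff ((monom (1::'a::comm_ring_1) d + monom 1 e) ^ k * monom 1 j) N =
     (\<Sum>a\<le>k. if a*d + (k-a)*e + j = N then of_nat (k choose a) else 0)"
proof -
  have "(monom (1::'a) d + monom 1 e) ^ k * monom 1 j =
        (\<Sum>a\<le>k. of_nat (k choose a) * monom 1 d ^ a * monom 1 e ^ (k - a)) * monom 1 j"
    by (simp add: binomial_ring)
  also have "\<dots> = (\<Sum>a\<le>k. monom (of_nat (k choose a)) (a*d + (k-a)*e + j))"
    unfolding sum_distrib_right
    by (intro sum.cong refl) (simp add: monom_power mult_monom of_nat_monom mult.commute add.commute)
  finally show ?thesis by (simp add: coeff_sum)
qed

lemma not_dvd_choose:
  assumes "prime (p::nat)" "n < p" "k \<le> n" shows "\<not> p dvd (n choose k)"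
proof
  assume "p dvd (n choose k)"
  then have "p dvd fact k * fact (n-k) * (n choose k)" by simp
  then have "p dvd fact n" using binomial_fact_lemma[OF assms(3)] by simp
  then show False using assms prime_dvd_fact_iff by fastforce
qed



lemma basis_iff:
  assumes "p > 0"
  shows "(i, j) \<in> AS_basis p D \<longleftrightarrow> i \<le> p - 2 \<and> (j + 1) * p < (p - i - 1) * D"
proof -
  have "int j \<le> \<lceil>real ((p - i - 1) * D) / real p\<rceil> - 2 \<longleftrightarrow>
        int j + 2 \<le> \<lceil>real ((p - i - 1) * D) / real p\<rceil>" by linarith
  also have "\<dots> \<longleftrightarrow> real_of_int (int j + 2) - 1 < real ((p - i - 1) * D) / real p"
    by (rule le_ceiling_iff)
  also have "\<dots> \<longleftrightarrow> real (j+1) < real ((p - i - 1) * D) / real p" by simp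
  also have "\<dots> \<longleftrightarrow> real (j+1) * real p < real ((p - i - 1) * D)"
    using assms by (simp add: pos_less_divide_eq)
  also have "\<dots> \<longleftrightarrow> (j + 1) * p < (p - i - 1) * D"
    by (metis of_nat_less_iff of_nat_mult)
  finally show ?thesis unfolding AS_basis_def by auto
qed

lemma pivot_exists:
  fixes q n :: nat
  defines "p \<equiv> 2*q+1" and "d \<equiv> 4*q*q+4*q+2" and "e \<equiv> 2*q*q+4*q+2"
  shows "\<exists>k0 a0. a0 \<le> k0 \<and> k0 \<le> a0 + 1 \<and> k0 \<le> q \<and> p dvd (a0*d + (k0-a0)*e + n + 1)"
proof -
  define s where "s = (2*n+2) mod p"
  have p0: "p > 0" unfolding p_def by simp
  obtain r where r: "r < p" "p dvd (r + (2*n+2))"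
  proof (cases "s = 0")
    case True
    then show ?thesis using that[of 0] p0 unfolding s_def by (simp add: mod_eq_0_iff_dvd)
  next
    case False
    have "s < p" using p0 unfolding s_def by simp
    have eq: "2*n+2 = p * ((2*n+2) div p) + s" unfolding s_def by simp
    have "p - s + (2*n+2) = p * (1 + (2*n+2) div p)"
      using \<open>s < p\<close> eq by (simp add: algebra_simps)
    then show ?thesis using that[of "p - s"] False \<open>s < p\<close> by (metis diff_less dvd_triv_left p0 zero_less_iff_neq_zero)
  qed
  obtain a0 c where ac: "r = 2*a0 + c" "c \<le> 1"
    by (metis add.right_neutral le_add2 le_numeral_extra(4) odd_two_times_div_two_succ
        even_two_times_div_two)
  have "2*a0 + c \<le> 2*q" using r(1) ac unfolding p_def by simp
  then have kq: "a0 + c \<le> q" using ac(2) by linarith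
  have key: "2 * (a0*d + ((a0+c)-a0)*e + n + 1) = p * (2*a0*p + c*p + 2*c) + (r + (2*n+2))"
    unfolding p_def d_def e_def ac by (simp add: algebra_simps)
  have "p dvd 2 * (a0*d + ((a0+c)-a0)*e + n + 1)"
    unfolding key using r(2) by (metis dvd_add dvd_triv_left)
  moreover have "coprime p 2" unfolding p_def by simp
  ultimately have "p dvd (a0*d + ((a0+c)-a0)*e + n + 1)"
    using coprime_dvd_mult_right_iff by blast
  then show ?thesis using kq ac(2) by (intro exI[of _ "a0+c"] exI[of _ a0]) auto
qed

lemma arithB1:
  fixes q :: nat
  defines "p \<equiv> 2*q+1" and "d \<equiv> 4*q*q+4*q+2" and "e \<equiv> 2*q*q+4*q+2"
  assumes "q \<le> m" "i < m" "m - k0 \<le> i" "a \<le> i - (m - k0)" "k0 \<le> a0 + 1" "a0 \<le> k0"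
    and "k0 \<le> m"
    and "(j+1)*p < (p - i - 1)*d"
    and "a*d + (i - (m - k0) - a)*e + j = a0*d + (k0-a0)*e + n"
  shows False
proof -
  define k' where "k' = i - (m - k0)"
  obtain b where b: "k' = a + b" using assms(7) unfolding k'_def by (metis le_add_diff_inverse)
  obtain \<delta> where del: "m = i + \<delta> + 1" using assms(5) by (metis add.commute add_Suc less_imp_Suc_add plus_1_eq_Suc)
  have k0: "k0 = k' + \<delta> + 1" unfolding k'_def using del assms by linarith
  obtain c where c: "a0 = a + \<delta> + c" using k0 b assms(8)
    by (metis add.commute add.left_commute le_add2 le_add_diff_inverse le_trans add_le_cancel_left)
  have cb: "c \<le> b + 1" "b \<le> c" using k0 b c assms(8,9) by linarith+
  have ib: "i - (m - k0) - a = b" using b unfolding k'_def by simp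
  have eq: "a*d + b*e + j = (a+\<delta>+c)*d + (b+1-c)*e + n"
    using assms(12) ib c k0 b by simp
  have de: "e \<le> d" unfolding d_def e_def by simp
  have jge: "\<delta>*d + e \<le> j"
  proof -
    have bd: "b*e \<le> b*d" using de by simp
    have "c = b \<or> c = b + 1" using cb by linarith
    then show ?thesis
    proof
      assume "c = b"
      then have "a*d + b*e + j = (a+\<delta>+b)*d + e + n" using eq by simp
      then show ?thesis using bd unfolding add_mult_distrib by linarith
    next
      assume "c = b + 1"
      then have "a*d + b*e + j = (a+\<delta>+b+1)*d + n" using eq by simp
      then show ?thesis using bd de unfolding add_mult_distrib by linarith
    qed
  qed
  have pi: "p - i - 1 \<le> q + \<delta> + 1" using del assms(4) unfolding p_def by linarith
  have "(p - i - 1)*d \<le> (q + \<delta> + 1)*d" using pi by (rule mult_right_mono) simp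
  also have "(q+\<delta>+1)*d + (2*q*\<delta>*d + 2*q*q+4*q+1) = (\<delta>*d+e+1)*p"
    unfolding d_def e_def p_def by (simp add: algebra_simps)
  then have "(q+\<delta>+1)*d \<le> (\<delta>*d+e+1)*p" by linarith
  also have "\<dots> \<le> (j+1)*p" using jge by simp
  finally show False using assms(11) by simp
qed

lemma arithB2:
  fixes q :: nat
  defines "p \<equiv> 2*q+1" and "d \<equiv> 4*q*q+4*q+2" and "e \<equiv> 2*q*q+4*q+2"
  assumes qm: "q \<le> m" and a0k: "a0 \<le> k0" and ka: "k0 \<le> a0 + 1" and kq: "k0 \<le> q"
    and ak: "a \<le> k0" and jn: "j < n"
    and nb: "(n+1)*p < (p - m - 1)*d"
    and eq: "a*d + (k0-a)*e + j = a0*d + (k0-a0)*e + n"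
    and dv: "p dvd (a0*d + (k0-a0)*e + n + 1)"
  shows False
proof -
  have de: "e \<le> d" unfolding d_def e_def by simp
  have "a0 < a"
  proof (rule ccontr)
    assume "\<not> a0 < a"
    then obtain t where t: "a0 = a + t" by (metis le_add_diff_inverse not_less)
    have "k0 - a = (k0 - a0) + t" using t a0k by simp
    then have "a*d + (k0-a0)*e + t*e + j = a*d + t*d + (k0-a0)*e + n"
      using eq t by (simp add: algebra_simps)
    moreover have "t*e \<le> t*d" using de by simp
    ultimately show False using jn by linarith
  qed
  then have aa: "a = k0" "k0 = a0 + 1" using ak ka by linarith+
  then have "a0*d + d + j = a0*d + e + n" using eq by (simp add: algebra_simps)
  then have n: "n = 2*q*q + j" unfolding d_def e_def by simp
  have "(n+1)*p < q*d"
  proof -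
    have "(p - m - 1)*d \<le> q*d" using qm unfolding p_def by (intro mult_right_mono) auto
    then show ?thesis using nb by linarith
  qed
  have jq: "j + 1 \<le> q"
  proof (rule ccontr)
    assume "\<not> j + 1 \<le> q"
    then obtain u where u: "j = q + u" by (metis le_add_diff_inverse not_less_eq_eq add.commute le_Suc_eq Suc_eq_plus1 not_le)
    have "q*d \<le> (n+1)*p" unfolding n u p_def d_def by (simp add: algebra_simps)
    then show False using \<open>(n+1)*p < q*d\<close> by linarith
  qed
  have "a0*d + (k0-a0)*e + n + 1 = p * (k0*p) + (k0 + j + 1)"
    using aa n unfolding p_def d_def e_def by (simp add: algebra_simps)
  then have "p dvd p * (k0*p) + (k0 + j + 1)" using dv by simp
  then have "p dvd (k0 + j + 1)" by (simp only: dvd_add_right_iff dvd_triv_left)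
  moreover have "k0 + j + 1 < p" using jq kq unfolding p_def by linarith
  ultimately show False using dvd_imp_le by fastforce
qed


lemma lin_inj:
  fixes a b k d e :: nat
  assumes "a \<le> k" "b \<le> k" "e < d" "a*d + (k-a)*e = b*d + (k-b)*e"
  shows "a = b"
proof -
  have h: "x*d + (k-x)*e = k*e + x*(d-e)" if "x \<le> k" for x
  proof -
    have "x*d = x*e + x*(d-e)" using assms(3) by (simp add: diff_mult_distrib2)
    moreover have "(k-x)*e + x*e = (k - x + x)*e" by (simp add: add_mult_distrib)
    then have "(k-x)*e + x*e = k*e" using that by simp
    ultimately show ?thesis by linarith
  qed
  have "a*(d-e) = b*(d-e)" using h[OF assms(1)] h[OF assms(2)] assms(4) by linarith
  then show ?thesis using assms(3) by simp
qed

theorem mainTheorem6: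
  fixes p d m n :: nat and f :: "'k::alg_closed_field poly"
  assumes "prime p" and "odd p" and "CHAR('k) = p"
    and "d = p ^ 2 + 1"
    and "f = - monom 1 d - monom 1 (d div 2 + p)"
    and "(m, n) \<in> AS_basis p (degree f)"
    and "real m \<ge> (real p - 1) / 2"
  shows "cartier_mono f m n \<notin>
           span_of {\<beta> \<in> AS_basis p (degree f). lex_less \<beta> (m, n)}
                   (\<lambda>\<beta>. cartier_mono f (fst \<beta>) (snd \<beta>))"
proof
  obtain q where P: "p = 2*q+1" using assms(2) oddE by blast
  have D: "d = 4*q*q+4*q+2" using assms(4) unfolding P by (simp add: power2_eq_square algebra_simps)
  define e where "e = 2*q*q+4*q+2"
  have E: "d div 2 + p = e" unfolding D P e_def by simp
  have q0: "q > 0" using assms(1) prime_gt_1_nat unfolding P by (cases q) auto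
  have ed: "e < d" unfolding D e_def using q0 by simp
  have mf: "- f = monom 1 d + monom 1 e" using assms(5) E by simp
  have degf: "degree f = d"
  proof -
    have "degree (monom (1::'k) d + monom 1 e) = d"
      using ed by (subst degree_add_eq_left) (simp_all add: degree_monom_eq)
    then show ?thesis using mf by (metis degree_minus)
  qed
  have p0: "p > 0" unfolding P by simp
  have primeC: "prime CHAR('k)" using assms(1,3) by simp
  have mq: "q \<le> m" using assms(7) unfolding P by simp
  have mb: "m \<le> p - 2" "(n + 1) * p < (p - m - 1) * d"
    using assms(6) unfolding degf basis_iff[OF p0] by auto
  obtain k0 a0 where piv: "a0 \<le> k0" "k0 \<le> a0 + 1" "k0 \<le> q"
      "p dvd (a0*d + (k0-a0)*e + n + 1)"
    using pivot_exists[of q n] unfolding P[symmetric] D[symmetric] e_def[symmetric] by blast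
  define N0 where "N0 = a0*d + (k0-a0)*e + n"
  obtain c where c: "N0 + 1 = p * c" using piv(4) unfolding N0_def by (auto elim: dvdE)
  have c1: "c \<ge> 1" using c by (cases c) auto
  define M where "M = c - 1"
  have MN: "(M + 1) * CHAR('k) - 1 = N0" unfolding M_def assms(3) using c c1 by (simp add: mult.commute)
  define t where "t = (m - k0, M)"
  have km: "k0 \<le> m" using piv(3) mq by linarith
  have cm: "cartier_mono f i j t = frob_root (of_nat (i choose (m - k0)) *
      (\<Sum>a\<le>i - (m-k0). if a*d + (i - (m-k0) - a)*e + j = N0 then of_nat ((i - (m-k0)) choose a) else 0))"
    for i j
  proof -
    have MN': "CHAR('k) + M * CHAR('k) - Suc 0 = N0" using MN by (simp add: algebra_simps)
    show ?thesis unfolding cartier_mono_def t_def mf by (simp add: coeff_binom MN')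
  qed
  have "cartier_mono f m n t = frob_root (of_nat (m choose (m - k0)) * of_nat (k0 choose a0))"
  proof -
    have mk: "m - (m - k0) = k0" using km by simp
    have "(\<Sum>a\<le>k0. if a*d + (k0 - a)*e + n = N0 then of_nat (k0 choose a) else (0::'k))
        = (\<Sum>a\<le>k0. if a = a0 then of_nat (k0 choose a) else 0)"
    proof (intro sum.cong refl)
      fix a assume "a \<in> {..k0}"
      then have "a*d + (k0 - a)*e + n = N0 \<longleftrightarrow> a = a0"
        using lin_inj[of a k0 a0 e d] piv(1) ed unfolding N0_def by auto
      then show "(if a*d + (k0 - a)*e + n = N0 then of_nat (k0 choose a) else (0::'k)) =
                 (if a = a0 then of_nat (k0 choose a) else 0)" by simp
    qed
    also have "\<dots> = of_nat (k0 choose a0)" using piv(1) by simp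
    finally show ?thesis using cm[of m n] unfolding mk by simp
  qed
  moreover have "of_nat (m choose (m - k0)) * of_nat (k0 choose a0) \<noteq> (0::'k)"
  proof -
    have "m < p" "k0 < p" using mb(1) km p0 by linarith+
    then have "\<not> p dvd (m choose (m - k0))" "\<not> p dvd (k0 choose a0)"
      using not_dvd_choose[OF assms(1)] piv(1) by auto
    then show ?thesis unfolding of_nat_mult[symmetric] of_nat_eq_0_iff_char_dvd assms(3)
      using assms(1) prime_dvd_mult_iff by blast
  qed
  ultimately have nz: "cartier_mono f m n t \<noteq> 0" using frob_root_nz[OF primeC] by simp
  have fr0: "frob_root (0::'k) = 0" by (rule frob_root_0) (use p0 assms(3) in simp)
  have z: "cartier_mono f i j t = 0" if zi: "(i, j) \<in> AS_basis p (degree f)" "lex_less (i, j) (m, n)" for i j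
  proof (cases "m - k0 \<le> i")
    case False
    then show ?thesis proof -
    have h: "i choose (m - k0) = 0" using False by simp
    show ?thesis by (simp only: cm h of_nat_0 mult_zero_left fr0)
  qed
  next
    case True
    have ib: "i \<le> p - 2" "(j + 1) * p < (p - i - 1) * d"
      using zi(1) unfolding degf basis_iff[OF p0] by auto
    have "a*d + (i - (m-k0) - a)*e + j \<noteq> N0" if a: "a \<le> i - (m - k0)" for a
    proof
      assume eq: "a*d + (i - (m-k0) - a)*e + j = N0"
      show False
      proof (cases "i < m")
        case True
        show False using arithB1[of q m i k0 a a0 j n] mq True \<open>m - k0 \<le> i\<close> a piv km ib(2) eq
          unfolding N0_def P[symmetric] D[symmetric] e_def[symmetric] by blast
      next
        case False
        then have im: "i = m" "j < n" using zi(2) unfolding lex_less_def by auto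
        then have "i - (m - k0) = k0" using km by simp
        then show False using arithB2[of q m a0 k0 a j n] mq piv im a mb(2) eq
          unfolding N0_def P[symmetric] D[symmetric] e_def[symmetric] by auto
      qed
    qed
    then show ?thesis unfolding cm using fr0 by simp
  qed
  assume "cartier_mono f m n \<in> span_of {\<beta> \<in> AS_basis p (degree f). lex_less \<beta> (m, n)}
                   (\<lambda>\<beta>. cartier_mono f (fst \<beta>) (snd \<beta>))"
  then obtain cc where "cartier_mono f m n = (\<lambda>s. \<Sum>b\<in>{\<beta> \<in> AS_basis p (degree f). lex_less \<beta> (m, n)}.
      cc b * cartier_mono f (fst b) (snd b) s)" unfolding span_of_def by blast
  then have "cartier_mono f m n t = (\<Sum>b\<in>{\<beta> \<in> AS_basis p (degree f). lex_less \<beta> (m, n)}.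
      cc b * cartier_mono f (fst b) (snd b) t)" by meson
  also have "\<dots> = 0" by (intro sum.neutral ballI) (auto simp: z)
  finally show False using nz by simp
qed

end
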